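(* Let $n\ge1$ and $1\le m\le n$. Suppose $A=(a_{ij})$ is an $n\times n$ $(m,\epsilon_A)$-matrix and set $K_A=\max_{i,j\le n,\,k\le m} a_{ij}/a_{kk}$. If $A'$ is an $n\times n$ $(m,\epsilon_{A'})$-matrix, then $AA'$ is an $(m,\epsilon_{AA'})$-matrix with $\epsilon_{AA'}=\epsilon_A+nK_A\epsilon_{A'}$.
   Context: For $\epsilon>0$ and $1\le m\le n$, an $n\times n$ nonnegative matrix $A=(a_{ij})$ with positive diagonal entries is an $(m,\epsilon)$-matrix if $a_{ij}/a_{jj}<\epsilon$ for all $j\le m$ and $i\neq j$. *)

theory Defs
  imports Main "HOL.Real"
begin

text \<open>n x n real matrices are represented as functions nat => nat => real,
  with row/column indices ranging over {1..n} (1-based, as in the paper).\<close>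

definition mat_mult :: "nat \<Rightarrow> (nat \<Rightarrow> nat \<Rightarrow> real) \<Rightarrow> (nat \<Rightarrow> nat \<Rightarrow> real) \<Rightarrow> (nat \<Rightarrow> nat \<Rightarrow> real)" where
  "mat_mult n A B = (\<lambda>i j. \<Sum>k\<in>{1..n}. A i k * B k j)"

definition is_m_eps_matrix :: "nat \<Rightarrow> nat \<Rightarrow> real \<Rightarrow> (nat \<Rightarrow> nat \<Rightarrow> real) \<Rightarrow> bool" where
  "is_m_eps_matrix n m eps A \<longleftrightarrow>
     0 < eps \<and> 1 \<le> m \<and> m \<le> n \<and>
     (\<forall>i\<in>{1..n}. \<forall>j\<in>{1..n}. 0 \<le> A i j) \<and>
     (\<forall>i\<in>{1..n}. 0 < A i i) \<and>
     (\<forall>j\<in>{1..m}. \<forall>i\<in>{1..n}. i \<noteq> j \<longrightarrow> A i j / A j j < eps)"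

definition K_const :: "nat \<Rightarrow> nat \<Rightarrow> (nat \<Rightarrow> nat \<Rightarrow> real) \<Rightarrow> real" where
  "K_const n m A = Max {A i j / A k k | i j k. i \<in> {1..n} \<and> j \<in> {1..n} \<and> k \<in> {1..m}}"

end

theory Submission
  imports Defs
begin

lemma K_ge:
  assumes "i \<in> {1..n}" "j \<in> {1..n}" "k \<in> {1..m}"
  shows "A i j / A k k \<le> K_const n m A"
proof -
  have eq: "{A i j / A k k | i j k. i \<in> {1..n} \<and> j \<in> {1..n} \<and> k \<in> {1..m}}
     = (\<lambda>(i,j,k). A i j / A k k) ` ({1..n}\<times>{1..n}\<times>{1..m})" proof (rule set_eqI, rule iffI)
    fix x assume "x \<in> {A i j / A k k | i j k. i \<in> {1..n} \<and> j \<in> {1..n} \<and> k \<in> {1..m}}"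
    then obtain i j k where "x = A i j / A k k" "i \<in> {1..n}" "j \<in> {1..n}" "k \<in> {1..m}" by blast
    then show "x \<in> (\<lambda>(i,j,k). A i j / A k k) ` ({1..n}\<times>{1..n}\<times>{1..m})"
      by (intro image_eqI[where x="(i,j,k)"]) auto
  qed (auto, blast)
  show ?thesis unfolding K_const_def eq
    by (rule Max_ge, simp, rule image_eqI[where x="(i,j,k)"]) (use assms in auto)
qed

theorem lemma2p2:
  fixes n m :: nat and epsA epsA' :: real and A A' :: "nat \<Rightarrow> nat \<Rightarrow> real"
  assumes "1 \<le> n" and "1 \<le> m" and "m \<le> n"
    and "is_m_eps_matrix n m epsA A"
    and "is_m_eps_matrix n m epsA' A'"
  shows "is_m_eps_matrix n m (epsA + real n * K_const n m A * epsA') (mat_mult n A A')"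
proof -
  note dA = assms(4)[unfolded is_m_eps_matrix_def]
  note dB = assms(5)[unfolded is_m_eps_matrix_def]
  let ?K = "K_const n m A"
  have K1: "1 \<le> ?K"
  proof -
    have "A 1 1 / A 1 1 \<le> ?K" by (rule K_ge) (use assms in auto)
    moreover have "A 1 1 > 0" using dA assms(1) by auto
    ultimately show ?thesis by simp
  qed
  have nonneg: "\<forall>i\<in>{1..n}. \<forall>j\<in>{1..n}. 0 \<le> mat_mult n A A' i j"
    unfolding mat_mult_def using dA dB by (auto intro!: sum_nonneg)
  have diagge: "A j j * A' j j \<le> mat_mult n A A' j j" if "j \<in> {1..n}" for j
  proof -
    have "A j j * A' j j = (\<Sum>k\<in>{j}. A j k * A' k j)" by simp
    also have "\<dots> \<le> (\<Sum>k\<in>{1..n}. A j k * A' k j)"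
      by (rule sum_mono2) (use that dA dB in auto)
    finally show ?thesis unfolding mat_mult_def by simp
  qed
  have diag: "\<forall>i\<in>{1..n}. 0 < mat_mult n A A' i i"
  proof
    fix i assume i: "i \<in> {1..n}"
    have "0 < A i i * A' i i" using dA dB i by auto
    with diagge[OF i] show "0 < mat_mult n A A' i i" by linarith
  qed
  have ratio: "mat_mult n A A' i j / mat_mult n A A' j j < epsA + real n * ?K * epsA'"
    if j: "j \<in> {1..m}" and i: "i \<in> {1..n}" and ij: "i \<noteq> j" for i j
  proof -
    have jn: "j \<in> {1..n}" using j assms(3) by auto
    have ajj: "A j j > 0" and bjj: "A' j j > 0" using dA dB jn by auto
    define P where "P = A j j * A' j j"
    have P: "P > 0" using ajj bjj P_def by simp
    define S where "S = mat_mult n A A' i j"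
    have S0: "S \<ge> 0" using nonneg i jn S_def by auto
    have spl: "S = A i j * A' j j + (\<Sum>k\<in>{1..n}-{j}. A i k * A' k j)"
      unfolding S_def mat_mult_def using jn
      by (subst sum.remove[of "{1..n}" j]) auto
    have trm: "(A i k * A' k j) / P \<le> ?K * epsA'" if k: "k \<in> {1..n}-{j}" for k
    proof -
      have "(A i k * A' k j) / P = (A i k / A j j) * (A' k j / A' j j)"
        unfolding P_def by simp
      also have "\<dots> \<le> ?K * epsA'"
      proof (rule mult_mono)
        show "A i k / A j j \<le> ?K" by (rule K_ge) (use i k j in auto)
        show "A' k j / A' j j \<le> epsA'" using dB j k by (auto intro: less_imp_le)
        show "0 \<le> ?K" using K1 by simp
        show "0 \<le> A' k j / A' j j" using dB k jn by auto
      qed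
      finally show ?thesis .
    qed
    have "(\<Sum>k\<in>{1..n}-{j}. A i k * A' k j) / P = (\<Sum>k\<in>{1..n}-{j}. (A i k * A' k j) / P)"
      by (simp add: sum_divide_distrib)
    also have "\<dots> \<le> (\<Sum>k\<in>{1..n}-{j}. ?K * epsA')" by (rule sum_mono) (rule trm)
    also have "\<dots> = real (n - 1) * (?K * epsA')" using jn by simp
    also have "\<dots> \<le> real n * ?K * epsA'"
    proof -
      have "0 \<le> ?K * epsA'" using K1 dB by simp
      moreover have "real (n-1) \<le> real n" by simp
      ultimately show ?thesis by (metis mult.assoc mult_right_mono)
    qed
    finally have T: "(\<Sum>k\<in>{1..n}-{j}. A i k * A' k j) / P \<le> real n * ?K * epsA'" .
    have F: "(A i j * A' j j) / P < epsA"
      using dA j i ij bjj unfolding P_def by simp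
    have "S / P < epsA + real n * ?K * epsA'"
      using T F unfolding spl by (simp add: add_divide_distrib)
    moreover have "S / mat_mult n A A' j j \<le> S / P"
      using diagge[OF jn] P S0 unfolding P_def by (simp add: divide_left_mono)
    ultimately show ?thesis unfolding S_def by linarith
  qed
  have epos: "0 < epsA + real n * ?K * epsA'"
    using dA dB K1 assms(1) by (simp add: add_pos_pos)
  show ?thesis unfolding is_m_eps_matrix_def
    using epos assms(2,3) nonneg diag ratio by blast
qed

end
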